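(* Let $\alpha=(\alpha_1,\ldots,\alpha_n)$ be a composition, $\sigma\in S_n$, and $i\in\{1,\ldots,n-1\}$ with $\alpha_i=\alpha_{i+1}$. The restriction $P_i:\mathrm{NAF}(\alpha,\sigma)\times\mathrm{NAF}(\alpha,\sigma s_i)\to\mathbb{Q}(q,t)$ is a probability map, i.e. $\sum_{U\in\mathrm{NAF}(\alpha,\sigma s_i)}P_i(T,U)=1$ for every $T\in\mathrm{NAF}(\alpha,\sigma)$.
   Context: Permutations are in one-line notation; $\sigma s_i$ is $\sigma$ with the entries in positions $i,i+1$ exchanged. A composition is a sequence of nonnegative integers. The skyline diagram is $\mathrm{dg}(\alpha)=\{(j,r):1\le j\le n,\ 1\le r\le\alpha_j\}$ ($j$ = column, $r$ = row) and the augmented diagram is $\mathrm{adg}(\alpha)=\mathrm{dg}(\alpha)\cup\{(j,0):1\le j\le n\}$ (row $0$ is the basement). For $u=(j,r)\in\mathrm{dg}(\alpha)$: $\mathrm{leg}(u)=\alpha_j-r$; the left arm set is $\{(j',r-1)\in\mathrm{adg}(\alpha):j'<j,\ \alpha_{j'}<\alpha_j\}$, the right arm set is $\{(j',r)\in\mathrm{dg}(\alpha):j'>j,\ \alpha_{j'}\le\alpha_j\}$, $\mathrm{Arm}(u)$ is their union and $\mathrm{arm}(u)=|\mathrm{Arm}(u)|$. Two boxes of $\mathrm{adg}(\alpha)$ attack each other if they are in the same row, or in consecutive rows with the box in the higher row strictly to the right of the box in the lower row. A filling of shape $\alpha$ and basement $\tau\in S_n$ is a map $T:\mathrm{adg}(\alpha)\to\{1,\ldots,n\}$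 with $T(j,0)=\tau_j$; $\mathrm{F}(\alpha,\tau)$ is the set of these, and $\mathrm{NAF}(\alpha,\tau)$ the subset of non-attacking ones (attacking boxes have distinct entries). For integers $a,b$ let $\chi(a,b)=1$ if $a>b$ and $0$ otherwise, and $\chi(a,b,c)=\chi(a,b)+\chi(b,c)-\chi(a,c)$. Fix $i$ with $\alpha_i=\alpha_{i+1}$. For a filling $T$ and $0\le r\le\alpha_i$, $\mathrm{swap}_r(T)$ exchanges the entries of boxes $(i,r)$ and $(i+1,r)$, and $\Omega_{0,h}=\mathrm{swap}_h\circ\cdots\circ\mathrm{swap}_0$. For $T\in\mathrm{NAF}(\alpha,\tau)$ and $0\le r\le\alpha_i-1$, let $a=T(i,r)$, $b=T(i+1,r)$, $c=T(i,r+1)$, $d=T(i+1,r+1)$, $A=\mathrm{arm}(i+1,r+1)$, $\ell=\mathrm{leg}(i+1,r+1)$, and define $\rho_r(T)\in\mathbb{Q}(q,t)$: if $a,b,c,d$ are distinct, $\rho_r(T)=0$ when $\chi(c,d,a)=\chi(c,d,b)$ and $\rho_r(T)=1$ when $\chi(c,d,a)=\chi(d,c,b)$; if exactly three of them are distinct, then $\rho_r(T)=0$ if $b=c$, $\rho_r(T)=1$ if $b=d$, and $\rho_r(T)=t^{1-\chi(d,a,b)}\frac{1-q^{\ell+1}t^{A+1}}{1-q^{\ell+1}t^{A+2}}$ if $a=c$; if $a=c$ and $b=d$, $\rho_r(T)=1$. Also set $\rho_{\alpha_i}(T)=0$. For $T\in\mathrm{NAF}(\alpha,\tau)$ and $U\in\mathrm{F}(\alpha,\tau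 s_i)$, $P_i(T,U)=\left(\prod_{r=0}^{h-1}\rho_r(T)\right)(1-\rho_h(T))$ if $U=\Omega_{0,h}(T)$ for some $h\in\{0,\ldots,\alpha_i\}$, and $P_i(T,U)=0$ otherwise. A probability map $\mathbf{T}\times\mathbf{U}\to\mathbb{Q}(q,t)$ is a function $P$ with $\sum_{U\in\mathbf{U}}P(T,U)=1$ for all $T\in\mathbf{T}$. *)

theory Defs
  imports "HOL-Computational_Algebra.Polynomial" "HOL-Computational_Algebra.Fraction_Field"
          "HOL-Combinatorics.Permutations"
begin

text \<open>Q(q,t) is the fraction field of Q[q][t]: polynomials in t with coefficients in Q[q].\<close>
type_synonym qt = "rat poly poly fract"

definition q_var :: qt where "q_var = Fract [:[:0, 1:]:] 1"
definition t_var :: qt where "t_var = Fract [:0, 1:] 1"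

text \<open>Boxes are pairs (column j, row r). A composition of length n is alpha :: nat => nat,
  of which only the values at 1..n matter.\<close>

definition dg :: "nat \<Rightarrow> (nat \<Rightarrow> nat) \<Rightarrow> (nat \<times> nat) set" where
  "dg n \<alpha> = {(j, r). 1 \<le> j \<and> j \<le> n \<and> 1 \<le> r \<and> r \<le> \<alpha> j}"

definition adg :: "nat \<Rightarrow> (nat \<Rightarrow> nat) \<Rightarrow> (nat \<times> nat) set" where
  "adg n \<alpha> = dg n \<alpha> \<union> {(j, 0) | j. 1 \<le> j \<and> j \<le> n}"

definition leg :: "(nat \<Rightarrow> nat) \<Rightarrow> nat \<times> nat \<Rightarrow> nat" where
  "leg \<alpha> u = \<alpha> (fst u) - snd u"

definition Arm_set :: "nat \<Rightarrow> (nat \<Rightarrow> nat) \<Rightarrow> nat \<times> nat \<Rightarrow> (nat \<times> nat) set" where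
  "Arm_set n \<alpha> u = (case u of (j, r) \<Rightarrow>
     {(j', r') \<in> adg n \<alpha>. r' = r - 1 \<and> j' < j \<and> \<alpha> j' < \<alpha> j}
     \<union> {(j', r') \<in> dg n \<alpha>. r' = r \<and> j' > j \<and> \<alpha> j' \<le> \<alpha> j})"

definition arm :: "nat \<Rightarrow> (nat \<Rightarrow> nat) \<Rightarrow> nat \<times> nat \<Rightarrow> nat" where
  "arm n \<alpha> u = card (Arm_set n \<alpha> u)"

definition attacks :: "nat \<times> nat \<Rightarrow> nat \<times> nat \<Rightarrow> bool" where
  "attacks u v = (u \<noteq> v \<and> (snd u = snd v
      \<or> (snd u = Suc (snd v) \<and> fst u > fst v)
      \<or> (snd v = Suc (snd u) \<and> fst v > fst u)))"

text \<open>Fillings: maps adg -> {1..n}, extended by 0 outside adg (so sets of fillings are finite).\<close>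
definition fillings :: "nat \<Rightarrow> (nat \<Rightarrow> nat) \<Rightarrow> (nat \<Rightarrow> nat) \<Rightarrow> (nat \<times> nat \<Rightarrow> nat) set" where
  "fillings n \<alpha> \<tau> = {T. (\<forall>x\<in>adg n \<alpha>. T x \<in> {1..n})
      \<and> (\<forall>j. 1 \<le> j \<and> j \<le> n \<longrightarrow> T (j, 0) = \<tau> j)
      \<and> (\<forall>x. x \<notin> adg n \<alpha> \<longrightarrow> T x = 0)}"

definition NAF :: "nat \<Rightarrow> (nat \<Rightarrow> nat) \<Rightarrow> (nat \<Rightarrow> nat) \<Rightarrow> (nat \<times> nat \<Rightarrow> nat) set" where
  "NAF n \<alpha> \<tau> = {T \<in> fillings n \<alpha> \<tau>.
      \<forall>u\<in>adg n \<alpha>. \<forall>v\<in>adg n \<alpha>. attacks u v \<longrightarrow> T u \<noteq> T v}"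

definition perm_si :: "(nat \<Rightarrow> nat) \<Rightarrow> nat \<Rightarrow> nat \<Rightarrow> nat" where
  "perm_si \<sigma> i j = (if j = i then \<sigma> (Suc i) else if j = Suc i then \<sigma> i else \<sigma> j)"

definition chi :: "nat \<Rightarrow> nat \<Rightarrow> int" where
  "chi a b = (if a > b then 1 else 0)"

definition chi3 :: "nat \<Rightarrow> nat \<Rightarrow> nat \<Rightarrow> int" where
  "chi3 a b c = chi a b + chi b c - chi a c"

definition swap_row :: "nat \<Rightarrow> nat \<Rightarrow> (nat \<times> nat \<Rightarrow> nat) \<Rightarrow> (nat \<times> nat \<Rightarrow> nat)" where
  "swap_row i r T = T((i, r) := T (Suc i, r), (Suc i, r) := T (i, r))"

fun Omega :: "nat \<Rightarrow> nat \<Rightarrow> (nat \<times> nat \<Rightarrow> nat) \<Rightarrow> (nat \<times> nat \<Rightarrow> nat)" where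
  "Omega i 0 T = swap_row i 0 T"
| "Omega i (Suc h) T = swap_row i (Suc h) (Omega i h T)"

definition rho :: "nat \<Rightarrow> (nat \<Rightarrow> nat) \<Rightarrow> nat \<Rightarrow> nat \<Rightarrow> (nat \<times> nat \<Rightarrow> nat) \<Rightarrow> qt" where
  "rho n \<alpha> i r T =
    (if r = \<alpha> i then 0 else
     (let a = T (i, r); b = T (Suc i, r); c = T (i, Suc r); d = T (Suc i, Suc r);
          A = arm n \<alpha> (Suc i, Suc r); lg = leg \<alpha> (Suc i, Suc r)
      in if card {a, b, c, d} = 4 then
           (if chi3 c d a = chi3 c d b then 0
            else if chi3 c d a = chi3 d c b then 1 else undefined)
         else if card {a, b, c, d} = 3 then
           (if b = c then 0
            else if b = d then 1
            else if a = c then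
              power_int t_var (1 - chi3 d a b) *
              (1 - q_var ^ (lg + 1) * t_var ^ (A + 1)) /
              (1 - q_var ^ (lg + 1) * t_var ^ (A + 2))
            else undefined)
         else if a = c \<and> b = d then 1
         else undefined))"

definition P_i :: "nat \<Rightarrow> (nat \<Rightarrow> nat) \<Rightarrow> nat \<Rightarrow> (nat \<times> nat \<Rightarrow> nat) \<Rightarrow> (nat \<times> nat \<Rightarrow> nat) \<Rightarrow> qt" where
  "P_i n \<alpha> i T U =
    (if \<exists>h. h \<le> \<alpha> i \<and> U = Omega i h T then
       (let h = (THE h. h \<le> \<alpha> i \<and> U = Omega i h T)
        in (\<Prod>r<h. rho n \<alpha> i r T) * (1 - rho n \<alpha> i h T))
     else 0)"

end

theory Submission
  imports Defs
begin

definition sw :: "nat \<Rightarrow> nat \<Rightarrow> nat" where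
  "sw i j = (if j = i then Suc i else if j = Suc i then i else j)"

definition phi :: "nat \<Rightarrow> nat \<Rightarrow> nat \<times> nat \<Rightarrow> nat \<times> nat" where
  "phi i h u = (if snd u \<le> h then sw i (fst u) else fst u, snd u)"

lemma Omega_eq: "Omega i h T = T \<circ> phi i h"
  by (induction h) (auto simp: swap_row_def phi_def sw_def fun_eq_iff)

lemma phi_invol: "phi i h (phi i h u) = u"
  by (cases u) (auto simp: phi_def sw_def)

lemma phi_adg:
  assumes "\<alpha> i = \<alpha> (Suc i)" "1 \<le> i" "i < n" "u \<in> adg n \<alpha>"
  shows "phi i h u \<in> adg n \<alpha>"
  using assms by (cases u) (auto simp: phi_def sw_def adg_def dg_def)

lemma phi_adg_iff:
  assumes "\<alpha> i = \<alpha> (Suc i)" "1 \<le> i" "i < n"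
  shows "phi i h u \<in> adg n \<alpha> \<longleftrightarrow> u \<in> adg n \<alpha>"
  using phi_adg[OF assms] phi_invol by metis

lemma key1:
  assumes "fst v < fst u" "snd u = Suc (snd v)" "\<not> (fst (phi i h v) < fst (phi i h u))"
  shows "\<exists>r\<le>h. u = (Suc i, Suc r) \<and> v = (i, r)"
  using assms by (cases u; cases v) (auto simp: phi_def sw_def split: if_splits)

lemma phi_snd: "snd (phi i h u) = snd u"
  by (simp add: phi_def)

lemma phi_inj: "phi i h u = phi i h v \<Longrightarrow> u = v"
  by (metis phi_invol)

lemma key_attack:
  assumes "attacks u v" "\<not> attacks (phi i h u) (phi i h v)"
  shows "\<exists>r\<le>h. (u = (Suc i, Suc r) \<and> v = (i, r)) \<or> (v = (Suc i, Suc r) \<and> u = (i, r))"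
proof -
  have ne: "phi i h u \<noteq> phi i h v" using assms(1) phi_inj unfolding attacks_def by blast
  show ?thesis
    using assms ne key1[of v u i h] key1[of u v i h] unfolding attacks_def phi_snd by auto
qed

lemma finite_adg: "finite (adg n \<alpha>)"
proof -
  have "adg n \<alpha> \<subseteq> {1..n} \<times> {0..(\<Sum>j\<in>{1..n}. \<alpha> j)}"
  proof
    fix x assume x: "x \<in> adg n \<alpha>"
    obtain j r where jr: "x = (j, r)" by (cases x)
    show "x \<in> {1..n} \<times> {0..(\<Sum>j\<in>{1..n}. \<alpha> j)}"
    proof (cases "r = 0")
      case True then show ?thesis using x jr by (auto simp: adg_def dg_def)
    next
      case False
      then have "j \<in> {1..n}" "r \<le> \<alpha> j" using x jr by (auto simp: adg_def dg_def)
      moreover have "\<alpha> j \<le> (\<Sum>j\<in>{1..n}. \<alpha> j)"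
        using \<open>j \<in> {1..n}\<close> by (intro member_le_sum) auto
      ultimately show ?thesis using jr by auto
    qed
  qed
  then show ?thesis by (rule finite_subset) auto
qed

lemma finite_fillings: "finite (fillings n \<alpha> \<tau>)"
proof -
  let ?g = "\<lambda>f x. if x \<in> adg n \<alpha> then f x else (0::nat)"
  have "fillings n \<alpha> \<tau> \<subseteq> ?g ` (adg n \<alpha> \<rightarrow>\<^sub>E {1..n})"
  proof
    fix T assume T: "T \<in> fillings n \<alpha> \<tau>"
    let ?f = "restrict T (adg n \<alpha>)"
    have "?f \<in> adg n \<alpha> \<rightarrow>\<^sub>E {1..n}" using T by (auto simp: fillings_def)
    moreover have "T = ?g ?f" using T by (auto simp: fillings_def fun_eq_iff)
    ultimately show "T \<in> ?g ` (adg n \<alpha> \<rightarrow>\<^sub>E {1..n})" by blast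
  qed
  moreover have "finite (adg n \<alpha> \<rightarrow>\<^sub>E {1..n})"
    using finite_adg by (intro finite_PiE) auto
  ultimately show ?thesis by (rule finite_subset[OF _ finite_imageI])
qed

lemma finite_NAF: "finite (NAF n \<alpha> \<tau>)"
  using finite_fillings[of n \<alpha> \<tau>] unfolding NAF_def by (rule rev_finite_subset) auto

lemma telescope:
  fixes f :: "nat \<Rightarrow> 'a::comm_ring_1"
  shows "(\<Sum>h\<le>m. (\<Prod>r<h. f r) * (1 - f h)) = 1 - (\<Prod>r<Suc m. f r)"
  by (induction m) (auto simp: algebra_simps)


lemma nafD: "T \<in> NAF n \<alpha> \<tau> \<Longrightarrow> u \<in> adg n \<alpha> \<Longrightarrow> v \<in> adg n \<alpha> \<Longrightarrow> attacks u v \<Longrightarrow> T u \<noteq> T v"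
  unfolding NAF_def by blast

lemma abcd:
  assumes "T \<in> NAF n \<alpha> \<tau>" "1 \<le> i" "i < n" "\<alpha> i = \<alpha> (Suc i)" "r < \<alpha> i"
  shows "T (i, r) \<noteq> T (Suc i, r)" "T (i, Suc r) \<noteq> T (Suc i, Suc r)" "T (i, r) \<noteq> T (Suc i, Suc r)"
proof -
  have adg: "(i, r) \<in> adg n \<alpha>" "(Suc i, r) \<in> adg n \<alpha>" "(i, Suc r) \<in> adg n \<alpha>" "(Suc i, Suc r) \<in> adg n \<alpha>"
    using assms by (auto simp: adg_def dg_def)
  show "T (i, r) \<noteq> T (Suc i, r)" by (rule nafD[OF assms(1) adg(1,2)]) (simp add: attacks_def)
  show "T (i, Suc r) \<noteq> T (Suc i, Suc r)" by (rule nafD[OF assms(1) adg(3,4)]) (simp add: attacks_def)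
  show "T (i, r) \<noteq> T (Suc i, Suc r)" by (rule nafD[OF assms(1) adg(1,4)]) (simp add: attacks_def)
qed

lemma rho_zero:
  assumes "T \<in> NAF n \<alpha> \<tau>" "1 \<le> i" "i < n" "\<alpha> i = \<alpha> (Suc i)" "r < \<alpha> i"
    and "T (Suc i, r) = T (i, Suc r)"
  shows "rho n \<alpha> i r T = 0"
proof -
  note d = abcd[OF assms(1-5)]
  have c: "card {T (i, r), T (Suc i, r), T (i, Suc r), T (Suc i, Suc r)} = 3"
    using d assms(6) by (simp add: card_insert_if)
  show ?thesis using c assms(5,6) unfolding rho_def Let_def by simp
qed

lemma rho_one:
  assumes "T \<in> NAF n \<alpha> \<tau>" "1 \<le> i" "i < n" "\<alpha> i = \<alpha> (Suc i)" "r < \<alpha> i"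
    and "T (Suc i, r) = T (Suc i, Suc r)"
  shows "rho n \<alpha> i r T = 1"
proof -
  note d = abcd[OF assms(1-5)]
  show ?thesis
  proof (cases "T (i, r) = T (i, Suc r)")
    case True
    have c: "card {T (i, r), T (Suc i, r), T (i, Suc r), T (Suc i, Suc r)} = 2"
      using d assms(6) True by (simp add: card_insert_if)
    show ?thesis using c assms(5,6) True unfolding rho_def Let_def by simp
  next
    case False
    have c: "card {T (i, r), T (Suc i, r), T (i, Suc r), T (Suc i, Suc r)} = 3"
      using d assms(6) False by (simp add: card_insert_if)
    show ?thesis using c assms(5,6) False d unfolding rho_def Let_def by simp
  qed
qed

lemma Omega_inj:
  assumes "T \<in> NAF n \<alpha> \<tau>" "1 \<le> i" "i < n" "\<alpha> i = \<alpha> (Suc i)"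
  shows "inj_on (\<lambda>h. Omega i h T) {..\<alpha> i}"
proof (rule inj_onI)
  have *: False if "h1 < h2" "h2 \<le> \<alpha> i" "Omega i h1 T = Omega i h2 T" for h1 h2
  proof -
    have "(Omega i h1 T) (i, h2) = T (i, h2)" using that(1) by (simp add: Omega_eq phi_def)
    moreover have "(Omega i h2 T) (i, h2) = T (Suc i, h2)" by (simp add: Omega_eq phi_def sw_def)
    moreover have "(i, h2) \<in> adg n \<alpha>" "(Suc i, h2) \<in> adg n \<alpha>"
      using assms that by (auto simp: adg_def dg_def)
    ultimately show False using nafD[OF assms(1)] that(3) by (auto simp: attacks_def)
  qed
  fix x y assume "x \<in> {..\<alpha> i}" "y \<in> {..\<alpha> i}" "Omega i x T = Omega i y T"
  then show "x = y" using *[of x y] *[of y x] by (metis linorder_neqE_nat atMost_iff)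
qed

lemma Omega_NAF:
  assumes "\<sigma> permutes {1..n}" "T \<in> NAF n \<alpha> \<sigma>" "1 \<le> i" "i < n" "\<alpha> i = \<alpha> (Suc i)"
    and "h \<le> \<alpha> i"
    and bc: "\<And>r. r < h \<Longrightarrow> T (Suc i, r) \<noteq> T (i, Suc r)"
    and bd: "h < \<alpha> i \<Longrightarrow> T (Suc i, h) \<noteq> T (Suc i, Suc h)"
  shows "Omega i h T \<in> NAF n \<alpha> (perm_si \<sigma> i)"
proof -
  have TF: "T \<in> fillings n \<alpha> \<sigma>" using assms(2) by (simp add: NAF_def)
  note pa = phi_adg[OF assms(5,3,4)]
  note pai = phi_adg_iff[OF assms(5,3,4)]
  have F: "Omega i h T \<in> fillings n \<alpha> (perm_si \<sigma> i)"
    unfolding fillings_def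
  proof (intro CollectI conjI ballI allI impI)
    fix x assume "x \<in> adg n \<alpha>"
    then show "Omega i h T x \<in> {1..n}" using TF pa[of x h] by (simp add: Omega_eq fillings_def)
  next
    fix j assume j: "1 \<le> j \<and> j \<le> n"
    then have "1 \<le> sw i j \<and> sw i j \<le> n" using assms(3,4) by (auto simp: sw_def)
    then show "Omega i h T (j, 0) = perm_si \<sigma> i j"
      using TF by (auto simp: Omega_eq fillings_def phi_def perm_si_def sw_def)
  next
    fix x assume "x \<notin> adg n \<alpha>"
    then have "phi i h x \<notin> adg n \<alpha>" using pai[of h x] by simp
    moreover have "\<forall>y. y \<notin> adg n \<alpha> \<longrightarrow> T y = 0" using TF unfolding fillings_def by blast
    ultimately show "Omega i h T x = 0" unfolding Omega_eq comp_def by blast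
  qed
  have NA: "Omega i h T u \<noteq> Omega i h T v"
    if u: "u \<in> adg n \<alpha>" and v: "v \<in> adg n \<alpha>" and at: "attacks u v" for u v
  proof (cases "attacks (phi i h u) (phi i h v)")
    case True
    then show ?thesis using nafD[OF assms(2) pa[OF u] pa[OF v]] by (simp add: Omega_eq)
  next
    case False
    have gen: "T (phi i h (Suc i, Suc r)) \<noteq> T (phi i h (i, r))"
      if r: "r \<le> h" "(Suc i, Suc r) \<in> adg n \<alpha>" for r
    proof -
      have "Suc r \<le> \<alpha> i" using r assms(5) by (auto simp: adg_def dg_def)
      show ?thesis
      proof (cases "r < h")
        case True
        then show ?thesis using bc[OF True] by (auto simp: phi_def sw_def)
      next
        case False
        then have "r = h" using r by simp
        then show ?thesis using bd \<open>Suc r \<le> \<alpha> i\<close> by (auto simp: phi_def sw_def)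
      qed
    qed
    from key_attack[OF at False] obtain r where "r \<le> h"
      "(u = (Suc i, Suc r) \<and> v = (i, r)) \<or> (v = (Suc i, Suc r) \<and> u = (i, r))" by blast
    then show ?thesis using gen u v unfolding Omega_eq comp_def by (metis (no_types, lifting))
  qed
  show ?thesis using F NA unfolding NAF_def by blast
qed

theorem corollary3p7:
  fixes n i :: nat and \<alpha> \<sigma> :: "nat \<Rightarrow> nat"
  assumes "\<sigma> permutes {1..n}"
    and "1 \<le> i" and "i < n"
    and "\<alpha> i = \<alpha> (Suc i)"
    and "T \<in> NAF n \<alpha> \<sigma>"
  shows "(\<Sum>U\<in>NAF n \<alpha> (perm_si \<sigma> i). P_i n \<alpha> i T U) = 1"
proof -
  define m where "m = \<alpha> i"
  define W where "W h = (\<Prod>r<h. rho n \<alpha> i r T) * (1 - rho n \<alpha> i h T)" for h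
  define Om where "Om h = Omega i h T" for h
  define N where "N = NAF n \<alpha> (perm_si \<sigma> i)"
  define g where "g U = P_i n \<alpha> i T U" for U
  have "Om = (\<lambda>h. Omega i h T)" by (simp add: fun_eq_iff Om_def)
  then have inj: "inj_on Om {..m}" using Omega_inj[OF assms(5,2,3,4)] by (simp add: m_def)
  have PO: "g (Om h) = W h" if "h \<le> m" for h
  proof -
    have ex: "\<exists>h'. h' \<le> \<alpha> i \<and> Om h = Omega i h' T" using that by (auto simp: Om_def m_def)
    have "(THE h'. h' \<le> \<alpha> i \<and> Om h = Omega i h' T) = h"
    proof (rule the_equality)
      show "h \<le> \<alpha> i \<and> Om h = Omega i h T" using that by (simp add: Om_def m_def)
      fix h' assume "h' \<le> \<alpha> i \<and> Om h = Omega i h' T"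
      then show "h' = h" using inj that unfolding inj_on_def Om_def m_def by auto
    qed
    then show ?thesis using ex unfolding g_def P_i_def W_def by (simp add: Om_def)
  qed
  have P0: "g U = 0" if "U \<notin> Om ` {..m}" for U
    using that unfolding g_def P_i_def Om_def m_def by auto
  have inN: "Om h \<in> N" if "h \<le> m" "W h \<noteq> 0" for h
  proof -
    have pr: "(\<Prod>r<h. rho n \<alpha> i r T) \<noteq> 0" and r1: "rho n \<alpha> i h T \<noteq> 1"
      using that(2) by (auto simp: W_def)
    have "rho n \<alpha> i r T \<noteq> 0" if "r < h" for r using pr that by auto
    then have bc: "T (Suc i, r) \<noteq> T (i, Suc r)" if "r < h" for r
      using rho_zero[OF assms(5,2,3,4)] that \<open>h \<le> m\<close> unfolding m_def by fastforce
    have bd: "T (Suc i, h) \<noteq> T (Suc i, Suc h)" if "h < \<alpha> i"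
      using rho_one[OF assms(5,2,3,4) that] r1 by blast
    show ?thesis using Omega_NAF[OF assms(1,5,2,3,4) _ bc bd] that(1)
      unfolding Om_def N_def m_def by blast
  qed
  have fN: "finite N" by (simp add: N_def finite_NAF)
  have "sum g N = sum g (N \<inter> Om ` {..m})"
    using fN P0 by (intro sum.mono_neutral_right) auto
  also have "\<dots> = sum g (Om ` {..m})"
  proof (rule sum.mono_neutral_left)
    show "\<forall>U\<in>Om ` {..m} - N \<inter> Om ` {..m}. g U = 0"
    proof
      fix U assume "U \<in> Om ` {..m} - N \<inter> Om ` {..m}"
      then obtain h where h: "h \<le> m" "U = Om h" "Om h \<notin> N" by auto
      then have "W h = 0" using inN by blast
      then show "g U = 0" using PO h by simp
    qed
  qed auto
  also have "\<dots> = (\<Sum>h\<le>m. g (Om h))" using inj by (simp add: sum.reindex)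
  also have "\<dots> = (\<Sum>h\<le>m. W h)" using PO by simp
  also have "\<dots> = 1 - (\<Prod>r<Suc m. rho n \<alpha> i r T)" unfolding W_def by (rule telescope)
  also have "\<dots> = 1" by (simp add: rho_def m_def)
  finally show ?thesis by (simp add: g_def N_def)
qed

end
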